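(* Let $f:H\to\mathbb{R}\cup\{+\infty\}$ be proper and lower semicontinuous, and let $(x^k)$ satisfy $\mathbf{H}_1$, $\mathbf{H}_2'$ and $\mathbf{H}_3$, with $m:=\inf_k a_kb_{k+1}>0$. Suppose $(x^k)$ $f$-converges to a point $x^*$ at which $f$ has the K\L{} property with desingularizing function $\varphi:[0,\eta[\to[0,+\infty[$. Let $\Phi:]0,\eta[\to\mathbb{R}$ be any primitive of $-(\varphi')^2$. (i) If $\lim_{t\to0^+}\Phi(t)\in\mathbb{R}$, then there is $K$ with $f(x^K)=f(x^* )$ and $x^k=x^*$ for all $k\ge K$. (ii) If $\lim_{t\to0^+}\Phi(t)=+\infty$, then there exists $k_0\in\mathbb{N}$ such that $f(x^k)-f(x^* )=O\Big(\Phi^{-1}\big(m\sum_{n=k_0}^{k-1}b_{n+1}\big)\Big)$ and $\|x^*-x^k\|=O\Big(\varphi\circ\Phi^{-1}\big(m\sum_{n=k_0}^{k-1}b_{n+1}\big)\Big)$.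
   Context: Subdifferential $\partial f$ (limiting Fréchet subdifferential), lazy slope $\|\partial f(x)\|_-=\inf_{p\in\partial f(x)}\|p\|$ ($+\infty$ if $\partial f(x)=\emptyset$), $f$-convergence: $x^k\to x$ strongly and $f(x^k)\to f(x)$. A desingularizing function is a continuous concave $\varphi:[0,\eta[\to[0,+\infty[$ with $\varphi(0)=0$, $C^1$ on $]0,\eta[$ with $\varphi'>0$; $f$ has the K\L{} property at $x^*$ with it if there is $\delta>0$ with $\varphi'(f(x)-f(x^* ))\|\partial f(x)\|_-\ge1$ for all $x$ with $\|x-x^*\|<\delta$ and $f(x^* )<f(x)<f(x^* )+\eta$. $\mathbf{H}_1$: $f(x^{k+1})+a_k\|x^{k+1}-x^k\|^2\le f(x^k)$, $a_k>0$. $\mathbf{H}_2'$: for each $k$, $b_{k+1}\|\partial f(x^k)\|_-\le\|x^{k+1}-x^k\|$ with $b_{k+1}>0$. $\mathbf{H}_3$: (i) $a_k\ge\underline a>0$; (ii) $(b_k)\notin\ell^1$; (iii) $\sup_{k\ge1}\frac1{a_kb_k}<\infty$. *)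

theory Defs
  imports "HOL-Analysis.Analysis" "HOL-Library.Landau_Symbols"
begin

definition proper_fun :: "('a \<Rightarrow> ereal) \<Rightarrow> bool" where
  "proper_fun f \<longleftrightarrow> (\<forall>x. f x \<noteq> -\<infinity>) \<and> (\<exists>x. f x < \<infinity>)"

definition lower_semicont :: "('a::topological_space \<Rightarrow> ereal) \<Rightarrow> bool" where
  "lower_semicont f \<longleftrightarrow> (\<forall>x t. t < f x \<longrightarrow> (\<forall>\<^sub>F y in at x. t < f y))"

text \<open>Frechet subdifferential: f x finite and
  liminf_{y -> x, y ~= x} (f y - f x - <p, y - x>) / norm (y - x) >= 0.\<close>
definition frechet_subdiff :: "('a::real_inner \<Rightarrow> ereal) \<Rightarrow> 'a \<Rightarrow> 'a set" where
  "frechet_subdiff f x = {p. \<bar>f x\<bar> \<noteq> \<infinity> \<and>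
     (\<forall>e>0. \<exists>d>0. \<forall>y. norm (y - x) < d \<longrightarrow>
        f x + ereal (p \<bullet> (y - x)) - ereal (e * norm (y - x)) \<le> f y)}"

definition limiting_subdiff :: "('a::real_inner \<Rightarrow> ereal) \<Rightarrow> 'a \<Rightarrow> 'a set" where
  "limiting_subdiff f x = {p. \<exists>xs ps. xs \<longlonglongrightarrow> x \<and> (\<lambda>n. f (xs n)) \<longlonglongrightarrow> f x \<and>
     (\<forall>n. ps n \<in> frechet_subdiff f (xs n)) \<and> (\<forall>v. (\<lambda>n. ps n \<bullet> v) \<longlonglongrightarrow> p \<bullet> v)}"

text \<open>Lazy slope: inf of norms over the limiting subdifferential (+infinity if empty).\<close>
definition lazy_slope :: "('a::real_inner \<Rightarrow> ereal) \<Rightarrow> 'a \<Rightarrow> ereal" where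
  "lazy_slope f x = (INF p \<in> limiting_subdiff f x. ereal (norm p))"

definition desingularizing :: "(real \<Rightarrow> real) \<Rightarrow> ereal \<Rightarrow> bool" where
  "desingularizing \<phi> \<eta> \<longleftrightarrow> 0 < \<eta> \<and>
     continuous_on {t. 0 \<le> t \<and> ereal t < \<eta>} \<phi> \<and>
     concave_on {t. 0 \<le> t \<and> ereal t < \<eta>} \<phi> \<and>
     \<phi> 0 = 0 \<and> (\<forall>t. 0 \<le> t \<and> ereal t < \<eta> \<longrightarrow> 0 \<le> \<phi> t) \<and>
     (\<forall>t. 0 < t \<and> ereal t < \<eta> \<longrightarrow> \<phi> differentiable (at t) \<and> 0 < deriv \<phi> t) \<and>
     continuous_on {t. 0 < t \<and> ereal t < \<eta>} (deriv \<phi>)"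

definition KL_at :: "('a::real_inner \<Rightarrow> ereal) \<Rightarrow> 'a \<Rightarrow> (real \<Rightarrow> real) \<Rightarrow> ereal \<Rightarrow> bool" where
  "KL_at f xs \<phi> \<eta> \<longleftrightarrow> \<bar>f xs\<bar> \<noteq> \<infinity> \<and> desingularizing \<phi> \<eta> \<and>
     (\<exists>\<delta>>0. \<forall>x. norm (x - xs) < \<delta> \<and> f xs < f x \<and> f x < f xs + \<eta> \<longrightarrow>
        1 \<le> ereal (deriv \<phi> (real_of_ereal (f x - f xs))) * lazy_slope f x)"

end

theory Submission imports Defs begin

lemma concave_deriv_le_slope:
  fixes \<phi> :: "real \<Rightarrow> real"
  assumes cc: "concave_on I \<phi>" and I: "y \<in> I" "x \<in> I" and yx: "y < x"
    and D: "(\<phi> has_real_derivative p) (at x)"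
  shows "p \<le> (\<phi> x - \<phi> y) / (x - y)"
proof -
  have cv: "convex_on I (\<lambda>z. - \<phi> z)" using cc by (simp add: concave_on_def)
  have lim: "((\<lambda>t. (\<phi> t - \<phi> x) / (t - x)) \<longlongrightarrow> p) (at_left x)"
    using has_field_derivativeD[OF has_field_derivative_at_within[OF D]] by simp
  have ev: "\<forall>\<^sub>F t in at_left x. (\<phi> t - \<phi> x) / (t - x) \<le> (\<phi> x - \<phi> y) / (x - y)"
    unfolding eventually_at_left_field
  proof (intro exI[of _ y] conjI allI impI)
    fix t assume t: "y < t" "t < x"
    have "((- \<phi> y) - (- \<phi> x)) / (y - x) \<le> ((- \<phi> t) - (- \<phi> x)) / (t - x)"
      by (rule convex_on_slope_le(2)[OF cv I t])
    then show "(\<phi> t - \<phi> x) / (t - x) \<le> (\<phi> x - \<phi> y) / (x - y)"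
      by (smt (verit, ccfv_SIG) minus_divide_divide minus_divide_left)
  qed (use yx in auto)
  show ?thesis
    by (rule tendsto_le[OF _ tendsto_const lim ev]) simp
qed

lemma concave_slope_le_deriv:
  fixes \<phi> :: "real \<Rightarrow> real"
  assumes cc: "concave_on I \<phi>" and I: "y \<in> I" "x \<in> I" and yx: "y < x"
    and D: "(\<phi> has_real_derivative p) (at y)"
  shows "(\<phi> x - \<phi> y) / (x - y) \<le> p"
proof -
  have cv: "convex_on I (\<lambda>z. - \<phi> z)" using cc by (simp add: concave_on_def)
  have lim: "((\<lambda>t. (\<phi> t - \<phi> y) / (t - y)) \<longlongrightarrow> p) (at_right y)"
    using has_field_derivativeD[OF has_field_derivative_at_within[OF D]] by simp
  have ev: "\<forall>\<^sub>F t in at_right y. (\<phi> x - \<phi> y) / (x - y) \<le> (\<phi> t - \<phi> y) / (t - y)"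
    unfolding eventually_at_right_field
  proof (intro exI[of _ x] conjI allI impI)
    fix t assume t: "y < t" "t < x"
    have "((- \<phi> y) - (- \<phi> t)) / (y - t) \<le> ((- \<phi> y) - (- \<phi> x)) / (y - x)"
      by (rule convex_on_slope_le(1)[OF cv I t])
    then show "(\<phi> x - \<phi> y) / (x - y) \<le> (\<phi> t - \<phi> y) / (t - y)"
      by (smt (verit, ccfv_SIG) minus_divide_divide minus_divide_left)
  qed (use yx in auto)
  show ?thesis
    by (rule tendsto_le[OF _ lim tendsto_const ev]) simp
qed

lemma ereal_key:
  fixes L :: ereal
  assumes "0 < p" "0 < bb" "0 \<le> L" "1 \<le> ereal p * L" "ereal bb * L \<le> ereal d"
  shows "bb \<le> p * d"
proof (cases L)
  case (real l)
  with assms have "1 \<le> p * l" "bb * l \<le> d" by auto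
  then have "bb * 1 \<le> bb * (p * l)" using assms(2) by (intro mult_left_mono) auto
  also have "\<dots> = p * (bb * l)" by simp
  also have "\<dots> \<le> p * d" using \<open>bb * l \<le> d\<close> assms(1) by (intro mult_left_mono) auto
  finally show ?thesis by simp
next
  case PInf with assms show ?thesis by simp
next
  case MInf with assms show ?thesis by simp
qed

lemma sum_unbounded:
  fixes g :: "nat \<Rightarrow> real"
  assumes pos: "\<And>n. 0 < g n" and ns: "\<not> summable g"
  shows "\<exists>N. \<forall>k\<ge>N. B < (\<Sum>n=k0..<k. g n)"
proof -
  have "\<exists>N. B + (\<Sum>n<k0. g n) < (\<Sum>n<N. g n)"
  proof (rule ccontr)
    assume "\<not> ?thesis"
    then have "\<And>N. (\<Sum>n<N. g n) \<le> B + (\<Sum>n<k0. g n)" by (simp add: not_less)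
    then have "summable g" using pos by (intro summableI_nonneg_bounded) (auto intro: less_imp_le)
    with ns show False by simp
  qed
  then obtain N where N: "B + (\<Sum>n<k0. g n) < (\<Sum>n<N. g n)" by blast
  show ?thesis
  proof (intro exI[of _ "max N k0"] allI impI)
    fix k assume k: "max N k0 \<le> k"
    have "(\<Sum>n<N. g n) \<le> (\<Sum>n<k. g n)"
      using k pos by (intro sum_mono2) (auto intro: less_imp_le)
    moreover have "(\<Sum>n<k. g n) = (\<Sum>n<k0. g n) + (\<Sum>n=k0..<k. g n)"
      using k by (metis max.bounded_iff sum.atLeastLessThan_concat lessThan_atLeast0 zero_le)
    ultimately show "B < (\<Sum>n=k0..<k. g n)" using N by linarith
  qed
qed

lemma desing_facts:
  assumes "desingularizing \<phi> \<eta>"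
  shows "concave_on {t. 0 \<le> t \<and> ereal t < \<eta>} \<phi>"
    and "\<And>t. 0 < t \<Longrightarrow> ereal t < \<eta> \<Longrightarrow> (\<phi> has_real_derivative deriv \<phi> t) (at t)"
    and "\<And>t. 0 < t \<Longrightarrow> ereal t < \<eta> \<Longrightarrow> 0 < deriv \<phi> t"
    and "\<And>t. 0 \<le> t \<Longrightarrow> ereal t < \<eta> \<Longrightarrow> 0 \<le> \<phi> t"
    and "0 < \<eta>"
  using assms unfolding desingularizing_def
  by (auto simp: DERIV_deriv_iff_real_differentiable)

lemma step_lemma:
  assumes des: "desingularizing \<phi> \<eta>"
    and prim: "\<forall>t. 0 < t \<and> ereal t < \<eta> \<longrightarrow> (\<Phi> has_real_derivative - (deriv \<phi> t)\<^sup>2) (at t)"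
    and r': "0 < r'" and r: "ereal r < \<eta>"
    and h1: "b' \<le> deriv \<phi> r * d" and h2: "r' + a * d\<^sup>2 \<le> r" and h3: "m \<le> a * b'"
    and pos: "0 < b'" "0 < m" "0 < a" and d0: "0 \<le> d"
  shows "\<Phi> r + m * b' \<le> \<Phi> r'" and "m * d \<le> \<phi> r - \<phi> r'"
proof -
  note F = desing_facts[OF des]
  let ?I = "{t. 0 \<le> t \<and> ereal t < \<eta>}"
  have ad: "0 \<le> a * d\<^sup>2" using pos by simp
  have rr: "r' \<le> r" using h2 ad by linarith
  have r0: "0 < r" using rr r' by linarith
  have r'e: "ereal r' < \<eta>" using rr r by (meson ereal_less_eq(3) order_le_less_trans)
  define p where "p = deriv \<phi> r"
  have p: "0 < p" using F(3)[OF r0 r] p_def by simp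
  have dpos: "0 < d" using h1 pos p d0 unfolding p_def[symmetric]
    by (smt (verit) mult_nonneg_nonpos)
  have ad2: "0 < a * d\<^sup>2" using pos dpos by simp
  have rlt: "r' < r" using h2 ad2 by linarith
  have pdb: "b' \<le> p * d" using h1 p_def by simp
  have tang: "p \<le> (\<phi> r - \<phi> r') / (r - r')"
    using concave_deriv_le_slope[OF F(1), of r' r p] r' r'e r0 r rlt F(2)[OF r0 r] p_def by simp
  hence t2: "p * (r - r') \<le> \<phi> r - \<phi> r'" using rlt by (simp add: le_divide_eq)
  have "m * d \<le> (a * b') * d" using h3 dpos by (intro mult_right_mono) auto
  also have "\<dots> \<le> (a * d) * (p * d)" using pdb pos dpos
    by (metis mult.commute mult.left_commute mult_left_mono less_imp_le mult_pos_pos)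
  also have "\<dots> = p * (a * d\<^sup>2)" by (simp add: power2_eq_square)
  also have "\<dots> \<le> p * (r - r')" using h2 p by (intro mult_left_mono) auto
  finally show "m * d \<le> \<phi> r - \<phi> r'" using t2 by linarith
  have "\<exists>z. r' < z \<and> z < r \<and> \<Phi> r - \<Phi> r' = (r - r') * (- (deriv \<phi> z)\<^sup>2)"
    apply (rule MVT2[OF rlt])
    using prim r' r by (smt (verit, best) ereal_less_eq(3) order_le_less_trans)
  then obtain z where z: "r' < z" "z < r" "\<Phi> r - \<Phi> r' = (r - r') * (- (deriv \<phi> z)\<^sup>2)" by blast
  have z0: "0 < z" and ze: "ereal z < \<eta>" using z r' r
    by (auto, meson ereal_less_eq(3) order_le_less_trans less_imp_le)
  have "p \<le> (\<phi> r - \<phi> z) / (r - z)"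
    using concave_deriv_le_slope[OF F(1), of z r p] z0 ze r0 r z F(2)[OF r0 r] p_def by simp
  also have "\<dots> \<le> deriv \<phi> z"
    using concave_slope_le_deriv[OF F(1), of z r] z0 ze r0 r z F(2)[OF z0 ze] by simp
  finally have pz: "p \<le> deriv \<phi> z" .
  have "m * b' \<le> (a * b') * b'" using h3 pos by (intro mult_right_mono) auto
  also have "\<dots> = a * b'\<^sup>2" by (simp add: power2_eq_square)
  also have "\<dots> \<le> a * (p * d)\<^sup>2" using pdb pos by (intro mult_left_mono power_mono) auto
  also have "\<dots> = (a * d\<^sup>2) * p\<^sup>2" by (simp add: power2_eq_square)
  also have "\<dots> \<le> (r - r') * p\<^sup>2" using h2 by (intro mult_right_mono) auto
  also have "\<dots> \<le> (r - r') * (deriv \<phi> z)\<^sup>2" using pz p rlt by (intro mult_left_mono power_mono) auto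
  finally show "\<Phi> r + m * b' \<le> \<Phi> r'" using z(3) by linarith
qed

lemma ereal_lt_trans_le: "(t1::real) \<le> t2 \<Longrightarrow> ereal t2 < \<eta> \<Longrightarrow> ereal t1 < \<eta>"
  by (meson ereal_less_eq(3) order_le_less_trans)

lemma Phi_strict_dec:
  assumes prim: "\<forall>t. 0 < t \<and> ereal t < \<eta> \<longrightarrow> (\<Phi> has_real_derivative - (deriv \<phi> t)\<^sup>2) (at t)"
    and pos: "\<And>t. 0 < t \<Longrightarrow> ereal t < \<eta> \<Longrightarrow> 0 < deriv \<phi> t"
    and t: "0 < t1" "t1 < t2" "ereal t2 < \<eta>"
  shows "\<Phi> t2 < \<Phi> t1"
proof -
  have "\<exists>z. t1 < z \<and> z < t2 \<and> \<Phi> t2 - \<Phi> t1 = (t2 - t1) * (- (deriv \<phi> z)\<^sup>2)"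
    apply (rule MVT2[OF t(2)])
    using prim t ereal_lt_trans_le by (smt (verit))
  then obtain z where z: "t1 < z" "z < t2" "\<Phi> t2 - \<Phi> t1 = (t2 - t1) * (- (deriv \<phi> z)\<^sup>2)" by blast
  have "0 < deriv \<phi> z" using pos[of z] z t ereal_lt_trans_le[of z t2 \<eta>] by auto
  then have "0 < (t2 - t1) * (deriv \<phi> z)\<^sup>2" using z by simp
  then show ?thesis using z(3) by simp
qed

lemma phi_mono:
  assumes der: "\<And>t. 0 < t \<Longrightarrow> ereal t < \<eta> \<Longrightarrow> (\<phi> has_real_derivative deriv \<phi> t) (at t)"
    and pos: "\<And>t. 0 < t \<Longrightarrow> ereal t < \<eta> \<Longrightarrow> 0 < deriv \<phi> t"
    and t: "0 < t1" "t1 \<le> t2" "ereal t2 < \<eta>"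
  shows "\<phi> t1 \<le> \<phi> t2"
proof (cases "t1 = t2")
  case False
  then have lt: "t1 < t2" using t by simp
  have "\<exists>z. t1 < z \<and> z < t2 \<and> \<phi> t2 - \<phi> t1 = (t2 - t1) * deriv \<phi> z"
    apply (rule MVT2[OF lt])
    using der t ereal_lt_trans_le by (smt (verit))
  then obtain z where z: "t1 < z" "z < t2" "\<phi> t2 - \<phi> t1 = (t2 - t1) * deriv \<phi> z" by blast
  have "0 < deriv \<phi> z" using pos[of z] z t ereal_lt_trans_le[of z t2 \<eta>] by auto
  then have "0 < (t2 - t1) * deriv \<phi> z" using lt by simp
  then show ?thesis using z(3) by linarith
qed simp

lemma in_range:
  assumes prim: "\<forall>t. 0 < t \<and> ereal t < \<eta> \<longrightarrow> (\<Phi> has_real_derivative - (deriv \<phi> t)\<^sup>2) (at t)"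
    and lim: "filterlim \<Phi> at_top (at_right 0)"
    and t0: "0 < t0" "ereal t0 < \<eta>" and s: "\<Phi> t0 \<le> s"
  shows "s \<in> \<Phi> ` {t. 0 < t \<and> ereal t < \<eta>}"
proof -
  have "\<forall>\<^sub>F t in at_right 0. s \<le> \<Phi> t" using lim by (simp add: filterlim_at_top)
  then obtain bb where bb: "bb > 0" "\<And>t. 0 < t \<Longrightarrow> t < bb \<Longrightarrow> s \<le> \<Phi> t"
    unfolding eventually_at_right_field by auto
  define t1 where "t1 = min bb t0 / 2"
  have t1: "0 < t1" "t1 < bb" "t1 \<le> t0" using bb t0 by (auto simp: t1_def)
  have s1: "s \<le> \<Phi> t1" using bb t1 by auto
  have cont: "continuous_on {t1..t0} \<Phi>"
  proof (intro continuous_at_imp_continuous_on ballI)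
    fix t assume "t \<in> {t1..t0}"
    then have "0 < t" "ereal t < \<eta>" using t1 t0 ereal_lt_trans_le[of t t0 \<eta>] by auto
    then show "isCont \<Phi> t" using prim DERIV_isCont by blast
  qed
  obtain t where t: "t1 \<le> t" "t \<le> t0" "\<Phi> t = s" using IVT2'[OF s s1 t1(3) cont] by blast
  have "0 < t" "ereal t < \<eta>" using t t1 t0 ereal_lt_trans_le[of t t0 \<eta>] by auto
  then show ?thesis using t by (auto intro!: image_eqI[of _ _ t])
qed

theorem mainTheorem6:
  fixes f :: "'a::{real_inner, complete_space} \<Rightarrow> ereal"
    and x :: "nat \<Rightarrow> 'a" and xs :: 'a
    and a b :: "nat \<Rightarrow> real"
    and \<phi> \<Phi> :: "real \<Rightarrow> real" and \<eta> :: ereal and m :: real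
  assumes proper: "proper_fun f" and lsc: "lower_semicont f"
    and H1: "\<forall>k. a k > 0 \<and> f (x (Suc k)) + ereal (a k * (norm (x (Suc k) - x k))\<^sup>2) \<le> f (x k)"
    and H2': "\<forall>k. b (Suc k) > 0 \<and>
               ereal (b (Suc k)) * lazy_slope f (x k) \<le> ereal (norm (x (Suc k) - x k))"
    and H3i: "\<exists>a_lb>0. \<forall>k. a_lb \<le> a k"
    and H3ii: "\<not> summable b"
    and H3iii: "bdd_above ((\<lambda>k. 1 / (a k * b k)) ` {1..})"
    and m_def: "m = (INF k. a k * b (Suc k))"
    and m_pos: "m > 0"
    and conv: "x \<longlonglongrightarrow> xs" "(\<lambda>k. f (x k)) \<longlonglongrightarrow> f xs"
    and KL: "KL_at f xs \<phi> \<eta>"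
    and prim: "\<forall>t. 0 < t \<and> ereal t < \<eta> \<longrightarrow> (\<Phi> has_real_derivative - (deriv \<phi> t)\<^sup>2) (at t)"
  shows "((\<exists>L. (\<Phi> \<longlongrightarrow> L) (at_right 0)) \<longrightarrow>
            (\<exists>K. f (x K) = f xs \<and> (\<forall>k\<ge>K. x k = xs)))
       \<and> (filterlim \<Phi> at_top (at_right 0) \<longrightarrow>
            (\<exists>k0. (\<lambda>k. real_of_ereal (f (x k)) - real_of_ereal (f xs)) \<in>
                     O(\<lambda>k. inv_into {t. 0 < t \<and> ereal t < \<eta>} \<Phi> (m * (\<Sum>n=k0..<k. b (Suc n))))
                \<and> (\<lambda>k. norm (xs - x k)) \<in>
                     O(\<lambda>k. \<phi> (inv_into {t. 0 < t \<and> ereal t < \<eta>} \<Phi> (m * (\<Sum>n=k0..<k. b (Suc n)))))))"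
proof -
  have des: "desingularizing \<phi> \<eta>" and fsfin: "\<bar>f xs\<bar> \<noteq> \<infinity>" using KL by (auto simp: KL_at_def)
  note F = desing_facts[OF des]
  obtain \<delta> where \<delta>: "\<delta> > 0" and KLi: "\<And>y. norm (y - xs) < \<delta> \<Longrightarrow> f xs < f y \<Longrightarrow> f y < f xs + \<eta> \<Longrightarrow>
        1 \<le> ereal (deriv \<phi> (real_of_ereal (f y - f xs))) * lazy_slope f y"
    using KL unfolding KL_at_def by blast
  define Fs where "Fs = real_of_ereal (f xs)"
  have fsE: "f xs = ereal Fs" using fsfin unfolding Fs_def by (cases "f xs") auto
  have mono: "f (x (Suc k)) \<le> f (x k)" for k
  proof -
    have "0 \<le> ereal (a k * (norm (x (Suc k) - x k))\<^sup>2)" using H1 by (simp add: less_imp_le)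
    then have "f (x (Suc k)) \<le> f (x (Suc k)) + ereal (a k * (norm (x (Suc k) - x k))\<^sup>2)"
      by (intro add_increasing2) auto
    also have "\<dots> \<le> f (x k)" using H1 by blast
    finally show ?thesis .
  qed
  have dec: "decseq (\<lambda>k. f (x k))" using mono by (intro decseq_SucI) 
  have ge: "f xs \<le> f (x k)" for k using decseq_ge[OF dec conv(2)] .
  have lz: "0 \<le> lazy_slope f y" for y unfolding lazy_slope_def by (rule INF_greatest) simp
  show ?thesis
  proof (cases "\<exists>K. f (x K) = f xs")
    case True
    then obtain K where K: "f (x K) = f xs" by blast
    have fe: "f (x k) = f xs" if "K \<le> k" for k
      using decseqD[OF dec that] K ge[of k] by simp
    have xc: "x k = x K" if "K \<le> k" for k
      using that
    proof (induction rule: dec_induct)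
      case (step n)
      have "f (x (Suc n)) + ereal (a n * (norm (x (Suc n) - x n))\<^sup>2) \<le> f (x n)" using H1 by blast
      then have "Fs + a n * (norm (x (Suc n) - x n))\<^sup>2 \<le> Fs"
        using fe[of n] fe[of "Suc n"] step fsE by simp
      then have "a n * (norm (x (Suc n) - x n))\<^sup>2 \<le> 0" by simp
      moreover have "a n > 0" using H1 by blast
      ultimately have "(norm (x (Suc n) - x n))\<^sup>2 \<le> 0"
        by (simp add: mult_le_0_iff)
      then have "norm (x (Suc n) - x n) = 0" by simp
      then show ?case using step by simp
    qed simp
    have "(\<lambda>k. x (k + K)) \<longlonglongrightarrow> xs" using LIMSEQ_ignore_initial_segment[OF conv(1)] .
    moreover have "(\<lambda>k. x (k + K)) = (\<lambda>k. x K)" by (rule ext, rule xc) simp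
    ultimately have "(\<lambda>k. x K) \<longlonglongrightarrow> xs" by simp
    then have xK: "x K = xs" by (simp add: LIMSEQ_const_iff)
    have zero: "g \<in> O(h)" if "\<forall>k\<ge>K. g k = 0" for g h :: "nat \<Rightarrow> real"
      using that by (intro bigoI[where c=1]) (auto simp: eventually_at_top_linorder intro!: exI[of _ K])
    have xe: "\<forall>k\<ge>K. x k = xs" using xc xK by metis
    have n0: "\<forall>k\<ge>K. norm (xs - x k) = 0" using xe by simp
    have f0: "\<forall>k\<ge>K. real_of_ereal (f (x k)) - real_of_ereal (f xs) = 0" using fe by simp
    show ?thesis
      using K xe zero[OF f0] zero[OF n0] by blast
  next
    case False
    then have gt: "f xs < f (x k)" for k using ge[of k] by (metis order_le_less)
    have eta0: "0 < \<eta>" using F(5) .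
    have "f xs < f xs + \<eta>" using fsE eta0 by (cases \<eta>) auto
    then have ev1: "\<forall>\<^sub>F k in sequentially. f (x k) < f xs + \<eta>"
      using order_tendstoD(2)[OF conv(2)] by blast
    have ev0: "\<forall>\<^sub>F k in sequentially. f (x k) < \<infinity>"
      using order_tendstoD(2)[OF conv(2), of \<infinity>] fsE by simp
    have ev2: "\<forall>\<^sub>F k in sequentially. norm (x k - xs) < \<delta>"
      using conv(1) \<delta> unfolding tendsto_iff by (simp add: dist_norm)
    obtain K where K: "\<And>k. K \<le> k \<Longrightarrow> f (x k) < f xs + \<eta> \<and> f (x k) < \<infinity> \<and> norm (x k - xs) < \<delta>"
      using eventually_conj[OF ev1 eventually_conj[OF ev0 ev2]] unfolding eventually_sequentially by blast
    define r where "r k = real_of_ereal (f (x k)) - Fs" for k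
    have fin: "f (x k) = ereal (r k + Fs)" if "K \<le> k" for k
    proof -
      have "f (x k) \<noteq> \<infinity>" "f (x k) \<noteq> - \<infinity>" using K[OF that] gt[of k] fsE by auto
      then show ?thesis unfolding r_def by (cases "f (x k)") auto
    qed
    have rpos: "0 < r k" if "K \<le> k" for k using gt[of k] fin[OF that] fsE by simp
    have reta: "ereal (r k) < \<eta>" if "K \<le> k" for k
    proof -
      have "ereal (r k + Fs) < ereal Fs + \<eta>" using K[OF that] fin[OF that] fsE by simp
      then show ?thesis by (cases \<eta>) auto
    qed
    have bdd: "bdd_below (range (\<lambda>k. a k * b (Suc k)))"
      using H1 H2' by (intro bdd_belowI[of _ 0]) (auto intro: less_imp_le)
    have key: "\<Phi> (r k) + m * b (Suc k) \<le> \<Phi> (r (Suc k)) \<and>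
               m * norm (x (Suc k) - x k) \<le> \<phi> (r k) - \<phi> (r (Suc k))" if k: "K \<le> k" for k
    proof -
      have k1: "K \<le> Suc k" using k by simp
      have diff: "real_of_ereal (f (x k) - f xs) = r k" using fin[OF k] fsE by simp
      have kl: "1 \<le> ereal (deriv \<phi> (r k)) * lazy_slope f (x k)"
        using KLi[of "x k"] K[OF k] gt[of k] diff by simp
      have h1: "b (Suc k) \<le> deriv \<phi> (r k) * norm (x (Suc k) - x k)"
        by (rule ereal_key[OF F(3)[OF rpos[OF k] reta[OF k]] _ lz kl]) (use H2' in auto)
      have "f (x (Suc k)) + ereal (a k * (norm (x (Suc k) - x k))\<^sup>2) \<le> f (x k)" using H1 by blast
      then have h2: "r (Suc k) + a k * (norm (x (Suc k) - x k))\<^sup>2 \<le> r k"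
        using fin[OF k] fin[OF k1] by simp
      have h3: "m \<le> a k * b (Suc k)" unfolding m_def by (rule cINF_lower[OF bdd]) simp
      show ?thesis
        using step_lemma[OF des prim rpos[OF k1] reta[OF k] h1 h2 h3] H1 H2' m_pos by auto
    qed
    have Phi_sum: "\<Phi> (r j) + m * (\<Sum>n=j..<k. b (Suc n)) \<le> \<Phi> (r k)" if j: "K \<le> j" and jk: "j \<le> k" for j k
      using jk
    proof (induction rule: dec_induct)
      case (step n)
      have "K \<le> n" using j step by simp
      from key[OF this] step.IH show ?case
        using step.hyps by (simp add: sum.atLeastLessThan_Suc distrib_left)
    qed simp
    have norm_tel: "m * norm (x k' - x k) \<le> \<phi> (r k) - \<phi> (r k')" if j: "K \<le> k" and jk: "k \<le> k'" for k k'
      using jk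
    proof (induction rule: dec_induct)
      case (step n)
      have "K \<le> n" using j step by simp
      have "norm (x (Suc n) - x k) \<le> norm (x (Suc n) - x n) + norm (x n - x k)"
        using norm_triangle_ineq[of "x (Suc n) - x n" "x n - x k"] by simp
      then have "m * norm (x (Suc n) - x k) \<le> m * norm (x (Suc n) - x n) + m * norm (x n - x k)"
        using m_pos by (simp add: distrib_left[symmetric])
      with key[OF \<open>K \<le> n\<close>] step.IH show ?case by linarith
    qed simp
    have normb: "m * norm (xs - x k) \<le> \<phi> (r k)" if k: "K \<le> k" for k
    proof (rule LIMSEQ_le_const2)
      show "(\<lambda>n. m * norm (x n - x k)) \<longlonglongrightarrow> m * norm (xs - x k)"
        by (intro tendsto_intros conv(1))
      show "\<exists>N. \<forall>n\<ge>N. m * norm (x n - x k) \<le> \<phi> (r k)"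
      proof (intro exI[of _ k] allI impI)
        fix n assume n: "k \<le> n"
        have "0 \<le> \<phi> (r n)" using F(4)[of "r n"] rpos[of n] reta[of n] k n by simp
        then show "m * norm (x n - x k) \<le> \<phi> (r k)" using norm_tel[OF k n] by linarith
      qed
    qed
    have "(\<lambda>k. real_of_ereal (f (x k))) \<longlonglongrightarrow> Fs"
      using lim_real_of_ereal[OF conv(2)[unfolded fsE]] .
    then have rlim: "r \<longlonglongrightarrow> 0" unfolding r_def
      using tendsto_diff[OF _ tendsto_const, of _ Fs sequentially Fs] by simp
    have "\<forall>\<^sub>F k in sequentially. r k \<in> {0<..} \<and> r k \<noteq> 0"
      unfolding eventually_sequentially
    proof (intro exI[of _ K] allI impI)
      fix k assume "K \<le> k"
      then have "0 < r k" by (rule rpos)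
      then show "r k \<in> {0<..} \<and> r k \<noteq> 0" by simp
    qed
    then have rat: "filterlim r (at_right 0) sequentially" unfolding filterlim_at
      using rlim by blast
    have sumbig: "\<exists>N. \<forall>k\<ge>N. B < m * (\<Sum>n=j..<k. b (Suc n))" for j B
    proof -
      have "\<not> summable (\<lambda>n. b (Suc n))" using H3ii summable_Suc_iff by blast
      moreover have "\<And>n. 0 < b (Suc n)" using H2' by blast
      ultimately obtain N where N: "\<forall>k\<ge>N. B / m < (\<Sum>n=j..<k. b (Suc n))"
        using sum_unbounded[of "\<lambda>n. b (Suc n)" "B / m" j] by blast
      have "B < m * (\<Sum>n=j..<k. b (Suc n))" if "N \<le> k" for k
      proof -
        have "B / m < (\<Sum>n=j..<k. b (Suc n))" using N that by blast
        then show ?thesis using m_pos by (simp add: divide_less_eq mult.commute)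
      qed
      then show ?thesis by blast
    qed
    show ?thesis
    proof (intro conjI impI)
      assume "\<exists>L. (\<Phi> \<longlongrightarrow> L) (at_right 0)"
      then obtain L where L: "(\<Phi> \<longlongrightarrow> L) (at_right 0)" by blast
      have "((\<lambda>k. \<Phi> (r k)) \<longlongrightarrow> L) sequentially" using filterlim_compose[OF L rat] .
      then have "\<forall>\<^sub>F k in sequentially. \<Phi> (r k) < L + 1" by (rule order_tendstoD) simp
      then obtain N1 where N1: "\<And>k. N1 \<le> k \<Longrightarrow> \<Phi> (r k) < L + 1"
        unfolding eventually_sequentially by blast
      obtain N2 where N2: "\<forall>k\<ge>N2. L + 1 - \<Phi> (r K) < m * (\<Sum>n=K..<k. b (Suc n))"
        using sumbig by blast
      define k where "k = max (max N1 N2) K"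
      have "\<Phi> (r K) + m * (\<Sum>n=K..<k. b (Suc n)) \<le> \<Phi> (r k)"
        by (rule Phi_sum) (auto simp: k_def)
      moreover have "\<Phi> (r k) < L + 1" by (rule N1) (simp add: k_def)
      moreover have "L + 1 - \<Phi> (r K) < m * (\<Sum>n=K..<k. b (Suc n))" using N2 by (simp add: k_def)
      ultimately have False by linarith
      then show "\<exists>K. f (x K) = f xs \<and> (\<forall>k\<ge>K. x k = xs)" ..
    next
      assume lim: "filterlim \<Phi> at_top (at_right 0)"
      have "filterlim (\<lambda>k. \<Phi> (r k)) at_top sequentially" using filterlim_compose[OF lim rat] .
      then have "\<forall>\<^sub>F k in sequentially. 0 \<le> \<Phi> (r k)" by (simp add: filterlim_at_top)
      then obtain N0 where N0: "\<And>k. N0 \<le> k \<Longrightarrow> 0 \<le> \<Phi> (r k)"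
        unfolding eventually_sequentially by blast
      define k0 where "k0 = max N0 K"
      have k0: "K \<le> k0" "0 \<le> \<Phi> (r k0)" using N0[of k0] by (auto simp: k0_def)
      define D where "D = {t. 0 < t \<and> ereal t < \<eta>}"
      define s where "s k = m * (\<Sum>n=k0..<k. b (Suc n))" for k
      define T where "T k = inv_into D \<Phi> (s k)" for k
      obtain N3 where N3: "\<forall>k\<ge>N3. \<Phi> (r k0) < s k" unfolding s_def using sumbig by blast
      have bound: "0 < r k \<and> r k \<le> T k \<and> T k \<in> D" if kk: "max N3 k0 \<le> k" for k
      proof -
        have kK: "K \<le> k" using kk k0 by simp
        have sD: "s k \<in> \<Phi> ` D" unfolding D_def
          using in_range[OF prim lim rpos[OF k0(1)] reta[OF k0(1)]] N3 kk by (simp add: less_imp_le)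
        have TD: "T k \<in> D" unfolding T_def using sD by (rule inv_into_into)
        have PT: "\<Phi> (T k) = s k" unfolding T_def using sD by (rule f_inv_into_f)
        have Pr: "s k \<le> \<Phi> (r k)" using Phi_sum[OF k0(1), of k] kk k0 unfolding s_def by simp
        have "r k \<le> T k"
        proof (rule ccontr)
          assume "\<not> r k \<le> T k"
          then have "T k < r k" by simp
          then have "\<Phi> (r k) < \<Phi> (T k)"
            using Phi_strict_dec[OF prim F(3), of "T k" "r k"] TD reta[OF kK] unfolding D_def by auto
          then show False using PT Pr by simp
        qed
        then show ?thesis using TD rpos[OF kK] by simp
      qed
      have O1: "r \<in> O(T)"
      proof (rule bigoI[where c=1])
        show "\<forall>\<^sub>F k in at_top. norm (r k) \<le> 1 * norm (T k)"
          unfolding eventually_at_top_linorder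
        proof (intro exI[of _ "max N3 k0"] allI impI)
          fix k assume "max N3 k0 \<le> k"
          from bound[OF this] show "norm (r k) \<le> 1 * norm (T k)" by simp
        qed
      qed
      have O2: "(\<lambda>k. norm (xs - x k)) \<in> O(\<lambda>k. \<phi> (T k))"
      proof (rule bigoI[where c="1/m"])
        show "\<forall>\<^sub>F k in at_top. norm (norm (xs - x k)) \<le> 1 / m * norm (\<phi> (T k))"
          unfolding eventually_at_top_linorder
        proof (intro exI[of _ "max N3 k0"] allI impI)
          fix k assume kk: "max N3 k0 \<le> k"
          have kK: "K \<le> k" using kk k0 by simp
          have b: "0 < r k" "r k \<le> T k" "T k \<in> D" using bound[OF kk] by auto
          have Te: "ereal (T k) < \<eta>" "0 < T k" using b(3) by (auto simp: D_def)
          have "\<phi> (r k) \<le> \<phi> (T k)" using phi_mono[OF F(2) F(3) b(1) b(2) Te(1)] .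
          moreover have "0 \<le> \<phi> (T k)" using F(4)[of "T k"] Te by simp
          moreover have "m * norm (xs - x k) \<le> \<phi> (r k)" using normb[OF kK] .
          ultimately show "norm (norm (xs - x k)) \<le> 1 / m * norm (\<phi> (T k))"
            using m_pos by (simp add: field_simps)
        qed
      qed
      show "\<exists>k0. (\<lambda>k. real_of_ereal (f (x k)) - real_of_ereal (f xs)) \<in>
                     O(\<lambda>k. inv_into {t. 0 < t \<and> ereal t < \<eta>} \<Phi> (m * (\<Sum>n=k0..<k. b (Suc n))))
                \<and> (\<lambda>k. norm (xs - x k)) \<in>
                     O(\<lambda>k. \<phi> (inv_into {t. 0 < t \<and> ereal t < \<eta>} \<Phi> (m * (\<Sum>n=k0..<k. b (Suc n)))))"
        using O1 O2 unfolding r_def Fs_def T_def s_def D_def by blast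
    qed
  qed
qed

end
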